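(* Let $(X,d,f)$ be a TDS. Then for all $\alpha>0$, $$\sup_{\mu\in M(X,f)}\underline h^{BK}_\mu(f,\alpha)\le h^\alpha_{top}(f,X).$$
   Context: A TDS $(X,d,f)$: compact metric space and continuous $f$; $M(X,f)$ is the set of $f$-invariant Borel probability measures. $d_n^\alpha(x,y)=\max_{0\le i\le n-1}e^{\alpha i}d(f^ix,f^iy)$; $B_n^\alpha(x,\varepsilon)=\{y:d_n^\alpha(x,y)<\varepsilon\}$. Lower $\alpha$-local Brin–Katok entropy: $\underline h^{BK}_\mu(f,\alpha)=\int_X\lim_{\varepsilon\to0}\liminf_{n\to\infty}\frac{-\log\mu(B_n^\alpha(x,\varepsilon))}{n}\,d\mu(x)$. $\alpha$-topological entropy: $E\subset X$ is $(n,\alpha,\varepsilon)$-spanning if every $x\in X$ has $y\in E$ with $d_n^\alpha(x,y)<\varepsilon$; $r_n(f,\alpha,X,\varepsilon)$ is the minimal cardinality of such a set; $h^\alpha_{top}(f,X)=\lim_{\varepsilon\to0}\limsup_{n\to\infty}\frac1n\log r_n(f,\alpha,X,\varepsilon)$. *)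

theory Defs
  imports "HOL-Probability.Probability"
begin

text \<open>Topological dynamical system: a compact metric space X (a compact subset of a
metric type, with the induced metric) and a continuous self map f of X.\<close>
definition TDS :: "'a::metric_space set \<Rightarrow> ('a \<Rightarrow> 'a) \<Rightarrow> bool" where
  "TDS X f \<longleftrightarrow> compact X \<and> continuous_on X f \<and> f ` X \<subseteq> X"

definition invariant_measures :: "'a::metric_space set \<Rightarrow> ('a \<Rightarrow> 'a) \<Rightarrow> 'a measure set" where
  "invariant_measures X f =
     {\<mu>. prob_space \<mu> \<and> sets \<mu> = sets (restrict_space borel X) \<and>
          (\<forall>A \<in> sets \<mu>. emeasure \<mu> (f -` A \<inter> X) = emeasure \<mu> A)}"

definition dn_alpha :: "('a::metric_space \<Rightarrow> 'a) \<Rightarrow> real \<Rightarrow> nat \<Rightarrow> 'a \<Rightarrow> 'a \<Rightarrow> real" where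
  "dn_alpha f \<alpha> n x y = (MAX i \<in> {..<n}. exp (\<alpha> * real i) * dist ((f ^^ i) x) ((f ^^ i) y))"

definition Bn_alpha :: "'a::metric_space set \<Rightarrow> ('a \<Rightarrow> 'a) \<Rightarrow> real \<Rightarrow> nat \<Rightarrow> 'a \<Rightarrow> real \<Rightarrow> 'a set" where
  "Bn_alpha X f \<alpha> n x \<epsilon> = {y \<in> X. dn_alpha f \<alpha> n x y < \<epsilon>}"

definition neg_log_ratio :: "'a measure \<Rightarrow> 'a set \<Rightarrow> nat \<Rightarrow> ereal" where
  "neg_log_ratio \<mu> B n =
     (if measure \<mu> B = 0 then \<infinity> else ereal (- ln (measure \<mu> B) / real n))"

definition local_lower_entropy ::
  "'a::metric_space set \<Rightarrow> ('a \<Rightarrow> 'a) \<Rightarrow> 'a measure \<Rightarrow> real \<Rightarrow> 'a \<Rightarrow> ereal" where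
  "local_lower_entropy X f \<mu> \<alpha> x =
     Lim (at_right (0::real))
       (\<lambda>\<epsilon>. liminf (\<lambda>n. neg_log_ratio \<mu> (Bn_alpha X f \<alpha> n x \<epsilon>) n))"

definition lower_BK_entropy ::
  "'a::metric_space set \<Rightarrow> ('a \<Rightarrow> 'a) \<Rightarrow> 'a measure \<Rightarrow> real \<Rightarrow> ereal" where
  "lower_BK_entropy X f \<mu> \<alpha> =
     enn2ereal (\<integral>\<^sup>+ x. e2ennreal (local_lower_entropy X f \<mu> \<alpha> x) \<partial>\<mu>)"

definition spanning :: "'a::metric_space set \<Rightarrow> ('a \<Rightarrow> 'a) \<Rightarrow> real \<Rightarrow> nat \<Rightarrow> real \<Rightarrow> 'a set \<Rightarrow> bool" where
  "spanning X f \<alpha> n \<epsilon> E \<longleftrightarrow> E \<subseteq> X \<and> (\<forall>x\<in>X. \<exists>y\<in>E. dn_alpha f \<alpha> n x y < \<epsilon>)"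

definition r_span :: "'a::metric_space set \<Rightarrow> ('a \<Rightarrow> 'a) \<Rightarrow> real \<Rightarrow> nat \<Rightarrow> real \<Rightarrow> nat" where
  "r_span X f \<alpha> n \<epsilon> = (LEAST k. \<exists>E. finite E \<and> card E = k \<and> spanning X f \<alpha> n \<epsilon> E)"

definition top_entropy_alpha :: "'a::metric_space set \<Rightarrow> ('a \<Rightarrow> 'a) \<Rightarrow> real \<Rightarrow> ereal" where
  "top_entropy_alpha X f \<alpha> =
     Lim (at_right (0::real))
       (\<lambda>\<epsilon>. limsup (\<lambda>n. ereal (ln (real (r_span X f \<alpha> n \<epsilon>)) / real n)))"

end

theory Submission
  imports Defs
begin

lemma funpow_cont:
  assumes "TDS X f"
  shows "continuous_on X (f ^^ i) \<and> (f ^^ i) ` X \<subseteq> X"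
proof (induction i)
  case 0
  then show ?case by (simp add: continuous_on_id)
next
  case (Suc i)
  have c: "continuous_on X f" "f ` X \<subseteq> X" using assms by (auto simp: TDS_def)
  have "continuous_on X (f \<circ> (f ^^ i))"
    by (rule continuous_on_compose) (use Suc c in \<open>auto intro: continuous_on_subset\<close>)
  moreover have "(f \<circ> (f ^^ i)) ` X \<subseteq> X" using Suc c by (auto simp: image_subset_iff)
  ultimately show ?case by simp
qed

lemma cont_Max:
  assumes "finite I" "I \<noteq> {}" "\<And>i. i \<in> I \<Longrightarrow> continuous_on S (g i)"
  shows "continuous_on S (\<lambda>y. MAX i\<in>I. g i y :: real)"
  using assms
proof (induction I rule: finite_ne_induct)
  case (singleton x)
  then show ?case by simp
next
  case (insert x F)
  have eq: "(\<lambda>y. MAX i\<in>insert x F. g i y) = (\<lambda>y. max (g x y) (MAX i\<in>F. g i y))"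
    using insert by (auto simp: Max_insert)
  show ?case unfolding eq
  proof (rule continuous_on_max)
    show "continuous_on S (g x)" using insert.prems by simp
    show "continuous_on S (\<lambda>y. MAX i\<in>F. g i y)" using insert.prems by (intro insert.IH) simp
  qed
qed

lemma dn_cont:
  assumes "TDS X f" "n > 0"
  shows "continuous_on X (dn_alpha f \<alpha> n x)"
proof -
  have "continuous_on X (\<lambda>y. MAX i\<in>{..<n}. exp (\<alpha> * real i) * dist ((f ^^ i) x) ((f ^^ i) y))"
  proof (rule cont_Max)
    fix i
    have "continuous_on X (f ^^ i)" using funpow_cont[OF assms(1)] by blast
    then show "continuous_on X (\<lambda>y. exp (\<alpha> * real i) * dist ((f ^^ i) x) ((f ^^ i) y))"
      by (intro continuous_intros)
  qed (use assms in auto)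
  then show ?thesis unfolding dn_alpha_def[abs_def] by simp
qed

lemma dn_sym: "dn_alpha f \<alpha> n x y = dn_alpha f \<alpha> n y x"
  unfolding dn_alpha_def by (simp add: dist_commute)

lemma dn_self: assumes "n > 0" shows "dn_alpha f \<alpha> n x x = 0"
proof -
  have "{..<n} \<noteq> {}" using assms by auto
  then show ?thesis unfolding dn_alpha_def by simp
qed

lemma dn_triangle:
  assumes "n > 0"
  shows "dn_alpha f \<alpha> n x z \<le> dn_alpha f \<alpha> n x y + dn_alpha f \<alpha> n y z"
proof -
  have "exp (\<alpha> * real i) * dist ((f ^^ i) x) ((f ^^ i) z) \<le> dn_alpha f \<alpha> n x y + dn_alpha f \<alpha> n y z"
    if "i < n" for i
  proof -
    have "exp (\<alpha> * real i) * dist ((f ^^ i) x) ((f ^^ i) z)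
       \<le> exp (\<alpha> * real i) * (dist ((f ^^ i) x) ((f ^^ i) y) + dist ((f ^^ i) y) ((f ^^ i) z))"
      by (intro mult_left_mono dist_triangle) auto
    also have "\<dots> = exp (\<alpha> * real i) * dist ((f ^^ i) x) ((f ^^ i) y) + exp (\<alpha> * real i) * dist ((f ^^ i) y) ((f ^^ i) z)"
      by (simp add: algebra_simps)
    also have "\<dots> \<le> dn_alpha f \<alpha> n x y + dn_alpha f \<alpha> n y z"
      unfolding dn_alpha_def by (intro add_mono Max_ge) (use that in auto)
    finally show ?thesis .
  qed
  then show ?thesis using assms unfolding dn_alpha_def[of f \<alpha> n x z]
    by (subst Max_le_iff) auto
qed

lemma Bn_open:
  assumes "TDS X f" "n > 0"
  shows "\<exists>V. open V \<and> Bn_alpha X f \<alpha> n x \<epsilon> = X \<inter> V"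
proof -
  obtain V where "open V" "V \<inter> X = dn_alpha f \<alpha> n x -` {..<\<epsilon>} \<inter> X"
    using dn_cont[OF assms, of \<alpha> x] unfolding continuous_on_open_invariant
    by (meson open_lessThan)
  then show ?thesis unfolding Bn_alpha_def by (intro exI[of _ V]) auto
qed

lemma Bn_meas:
  assumes "TDS X f" "n > 0" "sets \<mu> = sets (restrict_space borel X)"
  shows "Bn_alpha X f \<alpha> n x \<epsilon> \<in> sets \<mu>"
proof -
  obtain V where "open V" "Bn_alpha X f \<alpha> n x \<epsilon> = X \<inter> V" using Bn_open[OF assms(1,2)] by blast
  then show ?thesis using assms(3) by (auto simp: sets_restrict_space)
qed

lemma spanning_exists:
  assumes "TDS X f" "n > 0" "\<epsilon> > 0"
  shows "\<exists>E. finite E \<and> spanning X f \<alpha> n \<epsilon> E"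
proof -
  have "\<forall>x. \<exists>V. open V \<and> Bn_alpha X f \<alpha> n x \<epsilon> = X \<inter> V" using Bn_open[OF assms(1,2)] by blast
  then obtain V where V: "\<And>x. open (V x)" "\<And>x. Bn_alpha X f \<alpha> n x \<epsilon> = X \<inter> V x" by metis
  have cX: "compact X" using assms(1) by (simp add: TDS_def)
  have "X \<subseteq> (\<Union>x\<in>X. V x)"
  proof
    fix z assume "z \<in> X"
    then have "z \<in> Bn_alpha X f \<alpha> n z \<epsilon>" using assms dn_self[of n f \<alpha> z] by (simp add: Bn_alpha_def)
    then show "z \<in> (\<Union>x\<in>X. V x)" using V(2)[of z] \<open>z \<in> X\<close> by auto
  qed
  then obtain E where E: "E \<subseteq> X" "finite E" "X \<subseteq> (\<Union>x\<in>E. V x)"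
    using compactE_image[OF cX, of X V] V(1) by blast
  have "spanning X f \<alpha> n \<epsilon> E"
    unfolding spanning_def
  proof (intro conjI ballI)
    fix z assume "z \<in> X"
    then obtain y where "y \<in> E" "z \<in> V y" using E by auto
    then have "z \<in> Bn_alpha X f \<alpha> n y \<epsilon>" using V(2)[of y] \<open>z \<in> X\<close> by auto
    then show "\<exists>y\<in>E. dn_alpha f \<alpha> n z y < \<epsilon>" using \<open>y \<in> E\<close>
      by (auto simp: Bn_alpha_def dn_sym[of f \<alpha> n z])
  qed (use E in auto)
  then show ?thesis using E by blast
qed

lemma r_span_spec:
  assumes "TDS X f" "n > 0" "\<epsilon> > 0"
  shows "\<exists>E. finite E \<and> card E = r_span X f \<alpha> n \<epsilon> \<and> spanning X f \<alpha> n \<epsilon> E"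
proof -
  obtain E where "finite E" "spanning X f \<alpha> n \<epsilon> E" using spanning_exists[OF assms] by blast
  then have "\<exists>k. \<exists>E. finite E \<and> card E = k \<and> spanning X f \<alpha> n \<epsilon> E" by blast
  then show ?thesis unfolding r_span_def by (rule LeastI_ex)
qed

lemma r_span_mono:
  assumes "TDS X f" "n > 0" "0 < a" "a \<le> b"
  shows "r_span X f \<alpha> n b \<le> r_span X f \<alpha> n a"
proof -
  obtain E where E: "finite E" "card E = r_span X f \<alpha> n a" "spanning X f \<alpha> n a E"
    using r_span_spec[OF assms(1,2,3)] by blast
  have "spanning X f \<alpha> n b E" unfolding spanning_def
  proof (intro conjI ballI)
    show "E \<subseteq> X" using E(3) by (simp add: spanning_def)
    fix x assume "x \<in> X"
    then obtain y where "y \<in> E" "dn_alpha f \<alpha> n x y < a" using E(3) by (auto simp: spanning_def)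
    then show "\<exists>y\<in>E. dn_alpha f \<alpha> n x y < b" using assms(4) by (intro bexI[of _ y]) auto
  qed
  then have "\<exists>E'. finite E' \<and> card E' = r_span X f \<alpha> n a \<and> spanning X f \<alpha> n b E'"
    using E(1,2) by blast
  then show ?thesis unfolding r_span_def[of X f \<alpha> n b] by (rule Least_le)
qed

lemma ln_nat_nonneg: "0 \<le> ln (real a)"
  by (cases "a = 0") auto

lemma ln_nat_mono: "a \<le> b \<Longrightarrow> ln (real a) \<le> ln (real b)"
  using ln_nat_nonneg[of b] by (cases "a = 0") auto

lemma Lim_antimono:
  fixes g :: "real \<Rightarrow> ereal"
  assumes mono: "\<And>a b. 0 < a \<Longrightarrow> a \<le> b \<Longrightarrow> g b \<le> g a"
  shows "Lim (at_right 0) g = (SUP e\<in>{0<..}. g e)"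
proof -
  have "(g \<longlongrightarrow> (SUP e\<in>{0<..}. g e)) (at_right 0)"
  proof (rule order_tendstoI)
    fix a assume "a < (SUP e\<in>{0<..}. g e)"
    then obtain e where e: "e > 0" "a < g e" by (auto simp: less_SUP_iff)
    show "eventually (\<lambda>x. a < g x) (at_right 0)"
      unfolding eventually_at_right_field
    proof (intro exI[of _ e] conjI allI impI)
      fix y :: real assume "0 < y" "y < e"
      then have "g e \<le> g y" using mono[of y e] by simp
      then show "a < g y" using e(2) by (rule order.strict_trans2[rotated])
    qed (use e in simp)
  next
    fix a assume a: "(SUP e\<in>{0<..}. g e) < a"
    show "eventually (\<lambda>x. g x < a) (at_right 0)"
      unfolding eventually_at_right_field
    proof (intro exI[of _ 1] conjI allI impI)
      fix y :: real assume "0 < y" "y < 1"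
      then have "g y \<le> (SUP e\<in>{0<..}. g e)" by (intro SUP_upper) simp
      then show "g y < a" using a by (rule order.strict_trans1)
    qed simp
  qed
  then show ?thesis by (intro tendsto_Lim) auto
qed

lemma nlr_mono:
  assumes "prob_space \<mu>" "B2 \<in> sets \<mu>" "B1 \<subseteq> B2"
  shows "neg_log_ratio \<mu> B2 n \<le> neg_log_ratio \<mu> B1 n"
proof -
  interpret prob_space \<mu> by fact
  have le: "measure \<mu> B1 \<le> measure \<mu> B2" using assms by (intro finite_measure_mono)
  show ?thesis
  proof (cases "measure \<mu> B1 = 0")
    case True then show ?thesis by (simp add: neg_log_ratio_def)
  next
    case False
    then have p: "measure \<mu> B1 > 0" using measure_nonneg[of \<mu> B1] by linarith
    then have "measure \<mu> B2 \<noteq> 0" using le by linarith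
    moreover have "- ln (measure \<mu> B2) / real n \<le> - ln (measure \<mu> B1) / real n"
      using p le by (intro divide_right_mono) auto
    ultimately show ?thesis using False by (simp add: neg_log_ratio_def)
  qed
qed

lemma nlr_bound:
  assumes "n > 0" "ereal t < neg_log_ratio \<mu> B n"
  shows "measure \<mu> B \<le> exp (- real n * t)"
proof (cases "measure \<mu> B = 0")
  case True then show ?thesis by simp
next
  case False
  then have p: "measure \<mu> B > 0" using measure_nonneg[of \<mu> B] by linarith
  have "t < - ln (measure \<mu> B) / real n" using assms False by (simp add: neg_log_ratio_def)
  then have "t * real n < - ln (measure \<mu> B)" using assms by (simp add: field_simps)
  then have "ln (measure \<mu> B) < - real n * t" by (simp add: algebra_simps)
  then have "exp (ln (measure \<mu> B)) < exp (- real n * t)" by simp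
  then show ?thesis using p by simp
qed

lemma g_mono:
  assumes tds: "TDS X f" and ps: "prob_space \<mu>" and sets: "sets \<mu> = sets (restrict_space borel X)"
    and ab: "0 < a" "a \<le> b"
  shows "liminf (\<lambda>n. neg_log_ratio \<mu> (Bn_alpha X f \<alpha> n x b) n)
         \<le> liminf (\<lambda>n. neg_log_ratio \<mu> (Bn_alpha X f \<alpha> n x a) n)"
proof (rule Liminf_mono)
  show "\<forall>\<^sub>F n in sequentially. neg_log_ratio \<mu> (Bn_alpha X f \<alpha> n x b) n \<le> neg_log_ratio \<mu> (Bn_alpha X f \<alpha> n x a) n"
    using eventually_gt_at_top[of "0::nat"]
  proof eventually_elim
    case (elim n)
    show ?case
      by (rule nlr_mono[OF ps Bn_meas[OF tds elim sets]]) (use ab in \<open>auto simp: Bn_alpha_def\<close>)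
  qed
qed

lemma null_cover:
  assumes tds: "TDS X f" and ps: "prob_space \<mu>" and sets: "sets \<mu> = sets (restrict_space borel X)"
    and eps: "\<epsilon> > 0"
    and L: "limsup (\<lambda>n. ereal (ln (real (r_span X f \<alpha> n (\<epsilon>/2))) / real n)) < ereal t'"
    and tt: "t' < t"
  shows "AE x in \<mu>. x \<notin> {x\<in>X. \<forall>n\<ge>N. measure \<mu> (Bn_alpha X f \<alpha> n x \<epsilon>) \<le> exp (- real n * t)}"
proof -
  interpret prob_space \<mu> by fact
  define A where "A = {x\<in>X. \<forall>n\<ge>N. measure \<mu> (Bn_alpha X f \<alpha> n x \<epsilon>) \<le> exp (- real n * t)}"
  obtain M0 where M0: "\<And>n. n \<ge> M0 \<Longrightarrow> ereal (ln (real (r_span X f \<alpha> n (\<epsilon>/2))) / real n) < ereal t'"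
    using Limsup_lessD[OF L] unfolding eventually_sequentially by blast
  define M where "M = max M0 (max N 1)"
  have Cex: "\<exists>C. C \<in> sets \<mu> \<and> A \<subseteq> C \<and> measure \<mu> C \<le> exp (- real n * (t - t'))" if "n \<ge> M" for n
  proof -
    have n: "n > 0" "n \<ge> N" "n \<ge> M0" using that by (auto simp: M_def)
    obtain E where E: "finite E" "card E = r_span X f \<alpha> n (\<epsilon>/2)" "spanning X f \<alpha> n (\<epsilon>/2) E"
      using r_span_spec[OF tds n(1), of "\<epsilon>/2" \<alpha>] eps by auto
    define Y where "Y = {y\<in>E. \<exists>x\<in>A. dn_alpha f \<alpha> n x y < \<epsilon>/2}"
    define xy where "xy y = (SOME x. x\<in>A \<and> dn_alpha f \<alpha> n x y < \<epsilon>/2)" for y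
    have xy: "xy y \<in> A \<and> dn_alpha f \<alpha> n (xy y) y < \<epsilon>/2" if "y \<in> Y" for y
    proof -
      have "\<exists>x. x\<in>A \<and> dn_alpha f \<alpha> n x y < \<epsilon>/2" using that by (auto simp: Y_def)
      then show ?thesis unfolding xy_def by (rule someI_ex)
    qed
    define C where "C = (\<Union>y\<in>Y. Bn_alpha X f \<alpha> n (xy y) \<epsilon>)"
    have finY: "finite Y" using E(1) by (simp add: Y_def)
    have Cs: "C \<in> sets \<mu>" unfolding C_def using finY Bn_meas[OF tds n(1) sets] by auto
    have AC: "A \<subseteq> C"
    proof
      fix z assume z: "z \<in> A"
      then have zX: "z \<in> X" by (simp add: A_def)
      then obtain y where y: "y \<in> E" "dn_alpha f \<alpha> n z y < \<epsilon>/2" using E(3) by (auto simp: spanning_def)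
      then have yY: "y \<in> Y" using z by (auto simp: Y_def)
      have "dn_alpha f \<alpha> n (xy y) z \<le> dn_alpha f \<alpha> n (xy y) y + dn_alpha f \<alpha> n y z"
        by (rule dn_triangle[OF n(1)])
      also have "\<dots> < \<epsilon>" using xy[OF yY] y(2) dn_sym[of f \<alpha> n y z] by simp
      finally show "z \<in> C" using yY zX by (auto simp: C_def Bn_alpha_def)
    qed
    have cardE: "real (card E) \<le> exp (real n * t')"
    proof (cases "card E = 0")
      case True then show ?thesis by simp
    next
      case False
      have "ln (real (card E)) / real n < t'" using M0[OF n(3)] E(2) by simp
      then have "ln (real (card E)) < real n * t'" using n(1) by (simp add: field_simps)
      then have "exp (ln (real (card E))) < exp (real n * t')" by simp
      then show ?thesis using False by simp
    qed
    have "measure \<mu> C \<le> (\<Sum>y\<in>Y. measure \<mu> (Bn_alpha X f \<alpha> n (xy y) \<epsilon>))"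
      unfolding C_def using finY Bn_meas[OF tds n(1) sets] by (intro measure_UNION_le) auto
    also have "\<dots> \<le> (\<Sum>y\<in>Y. exp (- real n * t))"
      using xy n(2) by (intro sum_mono) (auto simp: A_def)
    also have "\<dots> = real (card Y) * exp (- real n * t)" by simp
    also have "\<dots> \<le> real (card E) * exp (- real n * t)"
      using E(1) by (intro mult_right_mono) (auto simp: Y_def intro: card_mono)
    also have "\<dots> \<le> exp (real n * t') * exp (- real n * t)"
      using cardE by (intro mult_right_mono) auto
    also have "\<dots> = exp (real n * t' + - real n * t)" by (rule exp_add[symmetric])
    also have "\<dots> = exp (- real n * (t - t'))" by (rule arg_cong[where f=exp]) (simp add: right_diff_distrib)
    finally show ?thesis using Cs AC by blast
  qed
  have "\<forall>n. \<exists>C. n \<ge> M \<longrightarrow> C \<in> sets \<mu> \<and> A \<subseteq> C \<and> measure \<mu> C \<le> exp (- real n * (t - t'))"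
    using Cex by blast
  then obtain C where C: "\<And>n. n \<ge> M \<Longrightarrow> C n \<in> sets \<mu> \<and> A \<subseteq> C n \<and> measure \<mu> (C n) \<le> exp (- real n * (t - t'))"
    by metis
  define D where "D = (\<Inter>n\<in>{M..}. C n)"
  have Ds: "D \<in> sets \<mu>" unfolding D_def using C by (intro sets.countable_INT') auto
  have AD: "A \<subseteq> D" using C by (auto simp: D_def)
  have Dle: "measure \<mu> D \<le> exp (- real n * (t - t'))" if "n \<ge> M" for n
  proof -
    have "measure \<mu> D \<le> measure \<mu> (C n)" using C[OF that] that by (intro finite_measure_mono) (auto simp: D_def)
    then show ?thesis using C[OF that] by linarith
  qed
  have lim: "(\<lambda>n. exp (- real n * (t - t'))) \<longlonglongrightarrow> 0"
  proof -
    have "(\<lambda>n. exp (- (t - t')) ^ n) \<longlonglongrightarrow> 0" using tt by (intro LIMSEQ_power_zero) auto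
    moreover have "exp (- real n * (t - t')) = exp (- (t - t')) ^ n" for n
    proof -
      have "exp (- real n * (t - t')) = exp (real n * (- (t - t')))" by (simp only: mult_minus_left mult_minus_right)
      also have "\<dots> = exp (- (t - t')) ^ n" by (rule exp_of_nat_mult)
      finally show ?thesis .
    qed
    ultimately show ?thesis by simp
  qed
  have "measure \<mu> D \<le> 0"
    by (rule tendsto_le[OF sequentially_bot lim tendsto_const])
       (use Dle in \<open>auto simp: eventually_sequentially\<close>)
  then have "measure \<mu> D = 0" using measure_nonneg[of \<mu> D] by linarith
  then have null: "D \<in> null_sets \<mu>" using Ds by (simp add: null_sets_def emeasure_eq_measure)
  show ?thesis by (rule AE_I'[OF null]) (use AD in \<open>auto simp: A_def\<close>)
qed

theorem theorem4p4:
  fixes X :: "'a::metric_space set" and f :: "'a \<Rightarrow> 'a" and \<alpha> :: real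
  assumes "TDS X f" and "\<alpha> > 0"
  shows "(SUP \<mu> \<in> invariant_measures X f. lower_BK_entropy X f \<mu> \<alpha>) \<le> top_entropy_alpha X f \<alpha>"
proof -
  define L where "L = (\<lambda>\<epsilon>. limsup (\<lambda>n. ereal (ln (real (r_span X f \<alpha> n \<epsilon>)) / real n)))"
  have Lmono: "L b \<le> L a" if "0 < a" "a \<le> b" for a b
    unfolding L_def
  proof (rule Limsup_mono)
    show "\<forall>\<^sub>F n in sequentially. ereal (ln (real (r_span X f \<alpha> n b)) / real n) \<le> ereal (ln (real (r_span X f \<alpha> n a)) / real n)"
      using eventually_gt_at_top[of "0::nat"]
      by eventually_elim (use that in \<open>auto intro!: divide_right_mono ln_nat_mono r_span_mono[OF assms(1)]\<close>)
  qed
  have htop: "top_entropy_alpha X f \<alpha> = (SUP e\<in>{0<..}. L e)"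
  proof -
    have "top_entropy_alpha X f \<alpha> = Lim (at_right 0) L" by (simp add: top_entropy_alpha_def L_def)
    also have "\<dots> = (SUP e\<in>{0<..}. L e)" by (rule Lim_antimono) (use Lmono in blast)
    finally show ?thesis .
  qed
  have Lnn: "0 \<le> L e" for e
    unfolding L_def by (intro le_Limsup always_eventually) (auto simp: ln_nat_nonneg)
  have htop_nn: "0 \<le> top_entropy_alpha X f \<alpha>" unfolding htop using Lnn
    by (intro SUP_upper2[of 1]) auto
  have Lle: "L e \<le> top_entropy_alpha X f \<alpha>" if "e > 0" for e
    unfolding htop using that by (intro SUP_upper) auto
  show ?thesis
  proof (rule SUP_least)
    fix \<mu> assume "\<mu> \<in> invariant_measures X f"
    then have ps: "prob_space \<mu>" and sets: "sets \<mu> = sets (restrict_space borel X)"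
      by (auto simp: invariant_measures_def)
    interpret prob_space \<mu> by fact
    have space: "space \<mu> = X" using sets_eq_imp_space_eq[OF sets] by (simp add: space_restrict_space)
    show "lower_BK_entropy X f \<mu> \<alpha> \<le> top_entropy_alpha X f \<alpha>"
    proof (cases "top_entropy_alpha X f \<alpha> = \<infinity>")
      case True then show ?thesis by simp
    next
      case False
      then obtain H where H: "top_entropy_alpha X f \<alpha> = ereal H"
        using htop_nn by (cases "top_entropy_alpha X f \<alpha>") auto
      have H0: "0 \<le> H" using htop_nn H by simp
      define h where "h = local_lower_entropy X f \<mu> \<alpha>"
      define g where "g x \<epsilon> = liminf (\<lambda>n. neg_log_ratio \<mu> (Bn_alpha X f \<alpha> n x \<epsilon>) n)" for x \<epsilon>
      have gm: "g x b \<le> g x a" if "0 < a" "a \<le> b" for x a b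
        unfolding g_def by (rule g_mono[OF assms(1) ps sets that])
      have hg: "h x = (SUP e\<in>{0<..}. g x e)" for x
      proof -
        have "h x = Lim (at_right 0) (g x)" by (simp add: h_def g_def[abs_def] local_lower_entropy_def)
        also have "\<dots> = (SUP e\<in>{0<..}. g x e)" by (rule Lim_antimono) (use gm in blast)
        finally show ?thesis .
      qed
      have cover: "\<exists>k N. x \<in> {x\<in>X. \<forall>n\<ge>N. measure \<mu> (Bn_alpha X f \<alpha> n x (1/real (Suc k))) \<le> exp (- real n * t)}"
        if xX: "x \<in> X" and lt: "ereal t < h x" for x t
      proof -
        obtain e where e: "e > 0" "ereal t < g x e" using lt unfolding hg by (auto simp: less_SUP_iff)
        obtain k where k: "inverse (real (Suc k)) < e" using reals_Archimedean[OF e(1)] by blast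
        have k': "1/real (Suc k) \<le> e" using k by (simp add: inverse_eq_divide)
        have "g x e \<le> g x (1/real (Suc k))" by (rule gm[OF _ k']) simp
        with e(2) have "ereal t < g x (1/real (Suc k))" by (rule order.strict_trans2)
        then have "eventually (\<lambda>n. ereal t < neg_log_ratio \<mu> (Bn_alpha X f \<alpha> n x (1/real (Suc k))) n) sequentially"
          unfolding g_def by (rule less_LiminfD)
        then obtain N where N: "\<And>n. n \<ge> N \<Longrightarrow> ereal t < neg_log_ratio \<mu> (Bn_alpha X f \<alpha> n x (1/real (Suc k))) n"
          unfolding eventually_sequentially by blast
        have "\<forall>n\<ge>Suc N. measure \<mu> (Bn_alpha X f \<alpha> n x (1/real (Suc k))) \<le> exp (- real n * t)"
        proof (intro allI impI)
          fix n assume n: "Suc N \<le> n"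
          show "measure \<mu> (Bn_alpha X f \<alpha> n x (1/real (Suc k))) \<le> exp (- real n * t)"
            by (rule nlr_bound) (use n N[of n] in auto)
        qed
        then show ?thesis using xX by blast
      qed
      have AEm: "AE x in \<mu>. h x \<le> ereal (H + 1/real (Suc m))" for m
      proof -
        define t where "t = H + 1/real (Suc m)"
        define t' where "t' = H + 1/(2*real (Suc m))"
        have p: "0 < 1/real (Suc m)" by simp
        have q: "1/(2*real (Suc m)) = (1/real (Suc m))/2" by simp
        obtain c where c: "c = 1/real (Suc m)" by blast
        have c0: "0 < c" using p c by simp
        have tc: "t = H + c" "t' = H + c/2" unfolding t_def t'_def q c by simp_all
        have tt: "t' < t" "H < t'" using tc c0 by linarith+
        have "AE x in \<mu>. \<forall>k N. x \<notin> {x\<in>X. \<forall>n\<ge>N. measure \<mu> (Bn_alpha X f \<alpha> n x (1/real (Suc k))) \<le> exp (- real n * t)}"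
        proof (subst AE_all_countable, intro allI, subst AE_all_countable, intro allI)
          fix k N
          have "L (1/real (Suc k)/2) \<le> ereal H" using Lle[of "1/real (Suc k)/2"] H by simp
          also have "\<dots> < ereal t'" using tt by simp
          finally have "L (1/real (Suc k)/2) < ereal t'" .
          then show "AE x in \<mu>. x \<notin> {x\<in>X. \<forall>n\<ge>N. measure \<mu> (Bn_alpha X f \<alpha> n x (1/real (Suc k))) \<le> exp (- real n * t)}"
            by (intro null_cover[OF assms(1) ps sets _ _ tt(1)]) (auto simp: L_def)
        qed
        then show ?thesis using AE_space
        proof eventually_elim
          case (elim x)
          show ?case
          proof (rule ccontr)
            assume "\<not> h x \<le> ereal (H + 1 / real (Suc m))"
            then have "ereal t < h x" by (simp add: t_def not_le)
            then show False using cover[of x t] elim space by blast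
          qed
        qed
      qed
      have AEh: "AE x in \<mu>. h x \<le> ereal H"
      proof -
        have "AE x in \<mu>. \<forall>m. h x \<le> ereal (H + 1/real (Suc m))" using AEm by (subst AE_all_countable) auto
        then show ?thesis
        proof eventually_elim
          case (elim x)
          show ?case
          proof (cases "h x")
            case (real r)
            show ?thesis
            proof (rule ccontr)
              assume "\<not> h x \<le> ereal H"
              then have "r - H > 0" using real by simp
              then obtain m where m: "inverse (real (Suc m)) < r - H" using reals_Archimedean by blast
              have "r \<le> H + 1/real (Suc m)" using elim[rule_format, of m] real by simp
              then show False using m by (simp add: inverse_eq_divide)
            qed
          next
            case PInf
            then show ?thesis using elim[rule_format, of 0] by simp
          qed simp
        qed
      qed
      have "(\<integral>\<^sup>+ x. e2ennreal (h x) \<partial>\<mu>) \<le> (\<integral>\<^sup>+ x. ennreal H \<partial>\<mu>)"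
      proof (rule nn_integral_mono_AE)
        show "AE x in \<mu>. e2ennreal (h x) \<le> ennreal H" using AEh
        proof eventually_elim
          case (elim x)
          then have "e2ennreal (h x) \<le> e2ennreal (ereal H)" by (rule e2ennreal_mono)
          then show ?case by (simp add: e2ennreal_ereal)
        qed
      qed
      also have "\<dots> = ennreal H" by (simp add: emeasure_space_1)
      finally have "enn2ereal (\<integral>\<^sup>+ x. e2ennreal (h x) \<partial>\<mu>) \<le> enn2ereal (ennreal H)"
        by (simp add: less_eq_ennreal.rep_eq)
      then show ?thesis unfolding lower_BK_entropy_def h_def H using H0 by simp
    qed
  qed
qed

end
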